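(* Let $\mathbb G=V_1\times V_2$ be a step-two Carnot group. Then $\mathcal A_h(\mathbb G)=\mathcal A(V_1\times V_2)$ if and only if the following holds: whenever $b:V_1\times V_2\to\mathbb R$ is bilinear and $b(x,[x,x'])=0$ for all $x,x'\in V_1$, then $b=0$.
   Context: A step-two Carnot group is $\mathbb G=V_1\times V_2$, where $V_1,V_2$ are finite-dimensional real vector spaces with $V_2\neq\{0\}$, equipped with a bilinear skew-symmetric map $[\cdot,\cdot]:V_1\times V_1\to V_2$ with $\operatorname{span}\{[x,x']:x,x'\in V_1\}=V_2$, and group law $(x,z)\cdot(x',z')=(x+x',z+z'+[x,x'])$. $\mathcal A_h(\mathbb G)$ is the space of $h$-affine maps $f:\mathbb G\to\mathbb R$, i.e. such that for all $(x,z)\in\mathbb G$, $y\in V_1$, $t\in\mathbb R\mapsto f((x,z)\cdot(ty,0))$ is affine; $\mathcal A(V_1\times V_2)$ is the space of maps that are affine in the usual sense on the vector space $V_1\times V_2$. *)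

theory Defs
  imports "HOL-Analysis.Analysis"
begin

text \<open>A step-two Carnot group structure on V1 x V2: V1, V2 finite-dimensional real
  vector spaces (modelled as euclidean_space types, hence V2 nonzero automatically),
  br the bracket V1 x V1 -> V2.\<close>
definition step_two_carnot :: "('a::euclidean_space \<Rightarrow> 'a \<Rightarrow> 'b::euclidean_space) \<Rightarrow> bool" where
  "step_two_carnot br \<longleftrightarrow> bilinear br \<and> (\<forall>x y. br x y = - br y x)
     \<and> span {br x y | x y. True} = UNIV"

definition carnot_mult :: "('a::real_vector \<Rightarrow> 'a \<Rightarrow> 'b::real_vector) \<Rightarrow> 'a \<times> 'b \<Rightarrow> 'a \<times> 'b \<Rightarrow> 'a \<times> 'b" where
  "carnot_mult br p q = (fst p + fst q, snd p + snd q + br (fst p) (fst q))"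

definition affine_real_fun :: "(real \<Rightarrow> real) \<Rightarrow> bool" where
  "affine_real_fun g \<longleftrightarrow> (\<exists>a c. \<forall>t. g t = a * t + c)"

definition h_affine :: "('a::real_vector \<Rightarrow> 'a \<Rightarrow> 'b::real_vector) \<Rightarrow> ('a \<times> 'b \<Rightarrow> real) \<Rightarrow> bool" where
  "h_affine br f \<longleftrightarrow> (\<forall>p y. affine_real_fun (\<lambda>t. f (carnot_mult br p (t *\<^sub>R y, 0))))"

definition affine_map :: "('v::real_vector \<Rightarrow> real) \<Rightarrow> bool" where
  "affine_map f \<longleftrightarrow> (\<exists>L c. linear L \<and> (\<forall>p. f p = L p + c))"

end

theory Submission
  imports Defs
begin


lemma aff_iff: "affine_real_fun g \<longleftrightarrow> (\<forall>t. g t = g 0 + t * (g 1 - g 0))"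
  unfolding affine_real_fun_def
proof
  assume "\<exists>a c. \<forall>t. g t = a * t + c"
  then obtain a c where h: "\<forall>t. g t = a * t + c" by blast
  show "\<forall>t. g t = g 0 + t * (g 1 - g 0)" using h by (simp add: algebra_simps)
next
  assume h: "\<forall>t. g t = g 0 + t * (g 1 - g 0)"
  show "\<exists>a c. \<forall>t. g t = a * t + c"
    by (rule exI[of _ "g 1 - g 0"], rule exI[of _ "g 0"]) (metis h add.commute mult.commute)
qed

lemma aff_val: "affine_real_fun g \<Longrightarrow> g t = g 0 + t * (g 1 - g 0)"
  using aff_iff by blast

lemma aff_add: "affine_real_fun f \<Longrightarrow> affine_real_fun g \<Longrightarrow> affine_real_fun (\<lambda>t. f t + g t)"
  unfolding affine_real_fun_def by (metis (no_types, opaque_lifting) add.assoc add.left_commute distrib_right)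

lemma aff_diff: "affine_real_fun f \<Longrightarrow> affine_real_fun g \<Longrightarrow> affine_real_fun (\<lambda>t. f t - g t)"
  unfolding affine_real_fun_def
proof -
  assume "\<exists>a c. \<forall>t. f t = a * t + c" "\<exists>a c. \<forall>t. g t = a * t + c"
  then obtain a c a' c' where "\<forall>t. f t = a * t + c" "\<forall>t. g t = a' * t + c'" by blast
  then show "\<exists>a c. \<forall>t. f t - g t = a * t + c"
    by (intro exI[of _ "a - a'"] exI[of _ "c - c'"]) (simp add: algebra_simps)
qed

lemma aff_scale: "affine_real_fun f \<Longrightarrow> affine_real_fun (\<lambda>t. k * f t)"
  unfolding affine_real_fun_def
proof -
  assume "\<exists>a c. \<forall>t. f t = a * t + c"
  then obtain a c where "\<forall>t. f t = a * t + c" by blast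
  then show "\<exists>a c. \<forall>t. k * f t = a * t + c"
    by (intro exI[of _ "k * a"] exI[of _ "k * c"]) (simp add: algebra_simps)
qed

lemma aff_const: "affine_real_fun (\<lambda>t. c)"
  unfolding affine_real_fun_def by (intro exI[of _ 0] exI[of _ c]) simp

lemma aff_lin: "affine_real_fun (\<lambda>t. a * t + c)"
  unfolding affine_real_fun_def by blast

lemma aff_comp: "affine_real_fun f \<Longrightarrow> affine_real_fun (\<lambda>t. f (a * t + b))"
  unfolding affine_real_fun_def
proof -
  assume "\<exists>a c. \<forall>t. f t = a * t + c"
  then obtain a' c where "\<forall>t. f t = a' * t + c" by blast
  then show "\<exists>a'' c. \<forall>t. f (a * t + b) = a'' * t + c"
    by (intro exI[of _ "a' * a"] exI[of _ "a' * b + c"]) (simp add: algebra_simps)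
qed

lemma aff_cong: "affine_real_fun f \<Longrightarrow> (\<And>t. g t = f t) \<Longrightarrow> affine_real_fun g"
  by (metis ext)

lemma lines_linear:
  fixes \<phi> :: "'v::real_vector \<Rightarrow> real"
  assumes h: "\<And>p v. affine_real_fun (\<lambda>t. \<phi> (p + t *\<^sub>R v))"
  shows "linear (\<lambda>p. \<phi> p - \<phi> 0)"
proof -
  have hom: "\<phi> (t *\<^sub>R v) - \<phi> 0 = t * (\<phi> v - \<phi> 0)" for t v
    using aff_val[OF h[of 0 v], of t] by simp
  have mid: "\<phi> (p + (1/2) *\<^sub>R (q - p)) = \<phi> p + (1/2) * (\<phi> q - \<phi> p)" for p q
    using aff_val[OF h[of p "q - p"], of "1/2"] by simp
  have add: "\<phi> (p + q) - \<phi> 0 = (\<phi> p - \<phi> 0) + (\<phi> q - \<phi> 0)" for p q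
  proof -
    have hh: "(1/2::real) *\<^sub>R p + (1/2) *\<^sub>R p = p" by (simp flip: scaleR_add_left)
    have e: "p + (1/2) *\<^sub>R (q - p) = (1/2) *\<^sub>R (p + q)"
      using hh by (simp add: algebra_simps)
    have a1: "\<phi> ((1/2) *\<^sub>R (p + q)) - \<phi> 0 = (1/2) * (\<phi> (p+q) - \<phi> 0)" by (rule hom)
    have a2: "\<phi> ((1/2) *\<^sub>R (p + q)) = \<phi> p + (1/2) * (\<phi> q - \<phi> p)"
      using mid[of p q] unfolding e .
    from a1 a2 show ?thesis by (simp add: field_simps)
  qed
  show ?thesis
    by (rule linearI) (simp_all add: add hom)
qed

lemma lines_affine:
  fixes \<phi> :: "'v::real_vector \<Rightarrow> real"
  assumes h: "\<And>p v. affine_real_fun (\<lambda>t. \<phi> (p + t *\<^sub>R v))"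
  shows "affine_map \<phi>"
  unfolding affine_map_def
  by (rule exI[of _ "\<lambda>p. \<phi> p - \<phi> 0"], rule exI[of _ "\<phi> 0"]) (simp add: lines_linear[OF h])



declare split_paired_All[simp del] split_paired_Ex[simp del]

lemma add_pair00[simp]: "(p::'a::real_vector \<times> 'b::real_vector) + (0, 0) = p"
  by (simp add: zero_prod_def[symmetric])

definition vd :: "'b::real_vector \<Rightarrow> ('a::real_vector \<times> 'b \<Rightarrow> real) \<Rightarrow> 'a \<times> 'b \<Rightarrow> real" where
  "vd d g p = g (p + (0, d)) - g p"

definition alongv :: "'b::real_vector \<Rightarrow> ('a::real_vector \<times> 'b \<Rightarrow> real) \<Rightarrow> bool" where
  "alongv w g \<longleftrightarrow> (\<forall>p. affine_real_fun (\<lambda>s. g (p + (0, s *\<^sub>R w))))"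

fun pol :: "'b::real_vector set \<Rightarrow> nat \<Rightarrow> ('a::real_vector \<times> 'b \<Rightarrow> real) \<Rightarrow> bool" where
  "pol S 0 h = (\<forall>p d. d \<in> S \<longrightarrow> h (p + (0, d)) = h p)"
| "pol S (Suc n) h = (\<forall>d\<in>S. pol S n (vd d h))"

lemma pair_add3: "(p::'a::real_vector \<times> 'b::real_vector) + (0, a) + (0, b) = p + (0, a + b)"
  by (simp add: algebra_simps)

lemma vd_comm: "vd a (vd b h) = vd b (vd a h)"
  by (rule ext) (simp add: vd_def add_ac)

lemma vd_zero_fun: "vd d (\<lambda>p. 0) = (\<lambda>p. 0)"
  by (rule ext) (simp add: vd_def)

lemma vd_add_fun: "vd d (\<lambda>p. f p + g p) = (\<lambda>p. vd d f p + vd d g p)"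
  by (rule ext) (simp add: vd_def)

lemma vd_scale_fun: "vd d (\<lambda>p. c * f p) = (\<lambda>p. c * vd d f p)"
  by (rule ext) (simp add: vd_def algebra_simps)

lemma pol_add: "pol S n f \<Longrightarrow> pol S n g \<Longrightarrow> pol S n (\<lambda>p. f p + g p)"
  by (induction n arbitrary: f g) (auto simp: vd_add_fun)

lemma pol_scale: "pol S n f \<Longrightarrow> pol S n (\<lambda>p. c * f p)"
  by (induction n arbitrary: f) (auto simp: vd_scale_fun)

lemma swap2: "(p::'a::real_vector \<times> 'b::real_vector) + (0, a) + (0, b) = (p + (0, b)) + (0, a)"
  by (simp add: add_ac)

lemma pol_vd: "pol S n h \<Longrightarrow> pol S n (vd e h)"
proof (induction n arbitrary: h)
  case 0
  show ?case
  proof (simp only: pol.simps, intro allI impI)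
    fix p d assume d: "d \<in> S"
    have "h (p + (0, d) + (0, e)) = h (p + (0, e))"
      unfolding swap2[of p d e] using 0 d by (simp only: pol.simps)
    moreover have "h (p + (0, d)) = h p" using 0 d by (simp only: pol.simps)
    ultimately show "vd e h (p + (0, d)) = vd e h p" by (simp add: vd_def)
  qed
next
  case (Suc n)
  then show ?case by (simp add: vd_comm[of _ e])
qed

lemma pol_mono: "pol S n h \<Longrightarrow> pol S (Suc n) h"
proof (induction n arbitrary: h)
  case 0
  show ?case
  proof (simp only: pol.simps, intro ballI allI impI)
    fix d p e assume d: "d \<in> S" and e: "e \<in> S"
    have z: "vd d h q = 0" for q using 0 d unfolding vd_def by (simp only: pol.simps)
    show "vd d h (p + (0, e)) = vd d h p" by (simp add: z)
  qed
next
  case (Suc n)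
  then show ?case by simp
qed

lemma alongv_vd: "alongv w h \<Longrightarrow> alongv w (vd d h)"
  unfolding alongv_def vd_def
proof
  fix p
  assume a: "\<forall>p. affine_real_fun (\<lambda>s. h (p + (0, s *\<^sub>R w)))"
  have "affine_real_fun (\<lambda>s. h ((p + (0, d)) + (0, s *\<^sub>R w)) - h (p + (0, s *\<^sub>R w)))"
    by (rule aff_diff) (use a in auto)
  then show "affine_real_fun (\<lambda>s. h (p + (0, s *\<^sub>R w) + (0, d)) - h (p + (0, s *\<^sub>R w)))"
    by (simp only: swap2)
qed

lemma alongv_val: "alongv w h \<Longrightarrow> h (p + (0, s *\<^sub>R w)) = h p + s * vd w h p"
  unfolding alongv_def vd_def using aff_val[of "\<lambda>s. h (p + (0, s *\<^sub>R w))" s] by auto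

lemma alongv_vd_scale: "alongv w h \<Longrightarrow> vd (c *\<^sub>R w) h p = c * vd w h p"
  using alongv_val[of w h p c] by (simp add: vd_def)

lemma alongv_vd_const: "alongv w h \<Longrightarrow> vd w h (p + (0, s *\<^sub>R w)) = vd w h p"
proof -
  assume a: "alongv w h"
  have e: "p + (0, s *\<^sub>R w) + (0, w) = p + (0, (s + 1) *\<^sub>R w)"
    by (simp add: algebra_simps)
  have "vd w h (p + (0, s *\<^sub>R w)) = h (p + (0, (s + 1) *\<^sub>R w)) - h (p + (0, s *\<^sub>R w))"
    by (simp only: vd_def e)
  also have "\<dots> = vd w h p"
    using alongv_val[OF a, of p "s+1"] alongv_val[OF a, of p s] by (simp add: algebra_simps)
  finally show ?thesis .
qed

lemma alongv_vdvd: "alongv w h \<Longrightarrow> vd w (vd w h) p = 0"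
  using alongv_vd_const[of w h p 1] by (simp add: vd_def[of w "vd w h"])

lemma const_along: "alongv w h \<Longrightarrow> (\<forall>p. vd w h p = 0) \<Longrightarrow> h (p + (0, c *\<^sub>R w)) = h p"
  using alongv_val[of w h p c] by simp

lemma add_pair2: "(p::'a::real_vector \<times> 'b::real_vector) + (0, u + v) = (p + (0, u)) + (0, v)"
  by (simp add: algebra_simps)

lemma P1:
  assumes "alongv w h" "\<forall>p. vd w h p = 0" "pol S n h"
  shows "pol {u + c *\<^sub>R w | u c. u \<in> S} n h"
  using assms
proof (induction n arbitrary: h)
  case 0
  show ?case
  proof (simp only: pol.simps, intro allI impI)
    fix p d assume "d \<in> {u + c *\<^sub>R w | u c. u \<in> S}"
    then obtain u c where d: "d = u + c *\<^sub>R w" "u \<in> S" by blast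
    have "h (p + (0, d)) = h ((p + (0, u)) + (0, c *\<^sub>R w))" by (simp only: d add_pair2)
    also have "\<dots> = h (p + (0, u))" using const_along[OF "0.prems"(1,2)] by blast
    also have "\<dots> = h p" using "0.prems"(3) d by (simp only: pol.simps)
    finally show "h (p + (0, d)) = h p" .
  qed
next
  case (Suc n)
  show ?case
  proof (simp only: pol.simps, intro ballI)
    fix d assume "d \<in> {u + c *\<^sub>R w | u c. u \<in> S}"
    then obtain u c where d: "d = u + c *\<^sub>R w" "u \<in> S" by blast
    have e: "vd d h = vd u h"
    proof (rule ext)
      fix p
      have "h (p + (0, d)) = h ((p + (0, u)) + (0, c *\<^sub>R w))" by (simp only: d add_pair2)
      also have "\<dots> = h (p + (0, u))" using const_along[OF Suc.prems(1,2)] by blast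
      finally show "vd d h p = vd u h p" by (simp add: vd_def)
    qed
    have "pol {u + c *\<^sub>R w | u c. u \<in> S} n (vd u h)"
    proof (rule Suc.IH)
      show "alongv w (vd u h)" by (rule alongv_vd[OF Suc.prems(1)])
      show "\<forall>p. vd w (vd u h) p = 0" using Suc.prems(2) by (simp add: vd_comm[of w u] vd_def)
      show "pol S n (vd u h)" using Suc.prems(3) d by simp
    qed
    then show "pol {u + c *\<^sub>R w | u c. u \<in> S} n (vd d h)" by (simp only: e)
  qed
qed

lemma add_pair2': "(p::'a::real_vector \<times> 'b::real_vector) + (0, u + v) = (p + (0, v)) + (0, u)"
  by (simp add: algebra_simps)

lemma P2:
  assumes C_vd: "\<And>h d. C h \<Longrightarrow> C (vd d h)" and C_al: "\<And>h. C h \<Longrightarrow> alongv w h"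
  shows "C h \<Longrightarrow> pol S n h \<Longrightarrow> pol {u + c *\<^sub>R w | u c. u \<in> S} (Suc n) h"
proof (induction n arbitrary: h)
  case 0
  have al: "alongv w h" using C_al[OF 0(1)] .
  show ?case
  proof (simp only: pol.simps, intro ballI allI impI)
    fix d p e
    assume "d \<in> {u + c *\<^sub>R w | u c. u \<in> S}"
    then obtain u c where d: "d = u + c *\<^sub>R w" "u \<in> S" by blast
    assume "e \<in> {u + c *\<^sub>R w | u c. u \<in> S}"
    then obtain u' c' where e: "e = u' + c' *\<^sub>R w" "u' \<in> S" by blast
    have k1: "vd d h q = c * vd w h q" for q
    proof -
      have "h (q + (0, d)) = h ((q + (0, c *\<^sub>R w)) + (0, u))" by (simp only: d add_pair2')
      also have "\<dots> = h (q + (0, c *\<^sub>R w))" using 0(2) d by (simp only: pol.simps)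
      also have "\<dots> = h q + c * vd w h q" by (rule alongv_val[OF al])
      finally show ?thesis by (simp add: vd_def)
    qed
    have p0: "pol S 0 (vd w h)" using pol_vd[OF 0(2)] .
    have k2: "vd w h (p + (0, e)) = vd w h p"
    proof -
      have "vd w h (p + (0, e)) = vd w h ((p + (0, u')) + (0, c' *\<^sub>R w))" by (simp only: e add_pair2)
      also have "\<dots> = vd w h (p + (0, u'))" by (rule alongv_vd_const[OF al])
      also have "\<dots> = vd w h p" using p0 e by (simp only: pol.simps)
      finally show ?thesis .
    qed
    show "vd d h (p + (0, e)) = vd d h p" by (simp only: k1 k2)
  qed
next
  case (Suc n)
  have al: "alongv w h" using C_al[OF Suc.prems(1)] .
  show ?case
  proof (simp only: pol.simps(2)[of _ "Suc n"], intro ballI)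
    fix d
    assume "d \<in> {u + c *\<^sub>R w | u c. u \<in> S}"
    then obtain u c where d: "d = u + c *\<^sub>R w" "u \<in> S" by blast
    have id: "vd d h = (\<lambda>p. vd u h p + c * (vd w h p + vd u (vd w h) p))"
    proof (rule ext)
      fix p
      have "h (p + (0, d)) = h ((p + (0, u)) + (0, c *\<^sub>R w))" by (simp only: d add_pair2)
      also have "\<dots> = h (p + (0, u)) + c * vd w h (p + (0, u))" by (rule alongv_val[OF al])
      finally show "vd d h p = vd u h p + c * (vd w h p + vd u (vd w h) p)"
        by (simp add: vd_def[of d] vd_def[of u] algebra_simps)
    qed
    let ?T = "{u + c *\<^sub>R w | u c. u \<in> S}"
    have t1: "pol ?T (Suc n) (vd u h)"
      using Suc.IH[OF C_vd[OF Suc.prems(1)]] Suc.prems(2) d by simp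
    have pw: "pol S (Suc n) (vd w h)" using pol_vd[OF Suc.prems(2)] .
    have t2: "pol ?T (Suc n) (vd w h)"
    proof (rule P1)
      show "alongv w (vd w h)" by (rule alongv_vd[OF al])
      show "\<forall>p. vd w (vd w h) p = 0" using alongv_vdvd[OF al] by blast
    qed (rule pw)
    have t3: "pol ?T (Suc n) (vd u (vd w h))"
      using Suc.IH[OF C_vd[OF C_vd[OF Suc.prems(1)]]] pw d by simp
    show "pol ?T (Suc n) (vd d h)"
      unfolding id by (intro pol_add pol_scale t1 t2 t3)
  qed
qed

lemma P3:
  fixes B :: "'b::real_vector set"
  assumes "finite B"
  shows "(\<forall>w\<in>B. alongv w (h::'a::real_vector \<times> 'b \<Rightarrow> real)) \<Longrightarrow> pol (span B) (card B) h"
  using assms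
proof (induction B arbitrary: h rule: finite_induct)
  case empty
  then show ?case by (simp only: pol.simps span_empty card.empty) simp
next
  case (insert x F)
  let ?C = "\<lambda>h. \<forall>w\<in>insert x F. alongv w (h::'a \<times> 'b \<Rightarrow> real)"
  have "pol {u + c *\<^sub>R x | u c. u \<in> span F} (Suc (card F)) h"
  proof (rule P2[where C = ?C])
    show "?C h \<Longrightarrow> ?C (vd d h)" for h d using alongv_vd by blast
    show "?C h \<Longrightarrow> alongv x h" for h by blast
    show "?C h" by (rule insert.prems)
    show "pol (span F) (card F) h" using insert.IH insert.prems by blast
  qed
  moreover have "{u + c *\<^sub>R x | u c. u \<in> span F} = span (insert x F)"
  proof -
    have "y \<in> span (insert x F) \<longleftrightarrow> (\<exists>u c. y = u + c *\<^sub>R x \<and> u \<in> span F)" for y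
      unfolding span_insert by (auto; metis add_diff_cancel diff_add_cancel)
    then show ?thesis by blast
  qed
  moreover have "card (insert x F) = Suc (card F)" using insert.hyps by simp
  ultimately show ?case by (simp only:)
qed



lemma add_pair_fs: "(p::'a::real_vector \<times> 'b::real_vector) + (0, Z) = (fst p, snd p + Z)"
  by (cases p) simp

lemma cm_assoc:
  assumes "bilinear br"
  shows "carnot_mult br (carnot_mult br p q) r = carnot_mult br p (carnot_mult br q r)"
  by (simp add: carnot_mult_def bilinear_ladd[OF assms] bilinear_radd[OF assms] algebra_simps)

lemma H_transl:
  assumes "bilinear br" "h_affine br g"
  shows "h_affine br (\<lambda>p. g (carnot_mult br q p))"
  using assms(2) unfolding h_affine_def by (simp add: cm_assoc[OF assms(1), symmetric])

lemma H_diff: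
  assumes "h_affine br f" "h_affine br g"
  shows "h_affine br (\<lambda>p. f p - g p)"
  using assms unfolding h_affine_def by (simp add: aff_diff)

lemma cm_vert:
  assumes "bilinear br"
  shows "carnot_mult br (0, d) p = p + (0, d)"
  by (simp add: carnot_mult_def bilinear_lzero[OF assms] prod_eq_iff add.commute)

lemma H_vd:
  assumes "bilinear br" "h_affine br g"
  shows "h_affine br (vd d g)"
proof -
  have "vd d g = (\<lambda>p. g (carnot_mult br (0, d) p) - g p)"
    by (rule ext) (simp add: vd_def cm_vert[OF assms(1)])
  then show ?thesis using H_diff[OF H_transl[OF assms] assms(2)] by simp
qed

lemma H_line:
  assumes "bilinear br" "h_affine br g"
  shows "affine_real_fun (\<lambda>t. g (x + t *\<^sub>R y, z + t *\<^sub>R br x y))"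
proof -
  have "affine_real_fun (\<lambda>t. g (carnot_mult br (x, z) (t *\<^sub>R y, 0)))"
    using assms(2) unfolding h_affine_def by blast
  moreover have "carnot_mult br (x, z) (t *\<^sub>R y, 0) = (x + t *\<^sub>R y, z + t *\<^sub>R br x y)" for t
    by (simp add: carnot_mult_def bilinear_rmul[OF assms(1)])
  ultimately show ?thesis by simp
qed

lemma F2:
  assumes bl: "bilinear br" and H: "h_affine br g"
  shows "alongv (br u v) g"
  unfolding alongv_def
proof
  fix p
  define g' where "g' = (\<lambda>q. g (carnot_mult br p q))"
  have H': "h_affine br g'" unfolding g'_def by (rule H_transl[OF bl H])
  have g'0: "g' (0, Z) = g (p + (0, Z))" for Z
    by (simp add: g'_def carnot_mult_def bilinear_rzero[OF bl] add_pair_fs)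
  have A: "affine_real_fun (\<lambda>t. g' (u + t *\<^sub>R v, 0 + t *\<^sub>R br u v))"
    by (rule H_line[OF bl H'])
  have B0: "affine_real_fun (\<lambda>t. g' (-u + t *\<^sub>R v, 0 + t *\<^sub>R br (-u) v))"
    by (rule H_line[OF bl H'])
  have B: "affine_real_fun (\<lambda>s. g' (- (u + s *\<^sub>R v), s *\<^sub>R br u v))"
  proof -
    have "affine_real_fun (\<lambda>s. g' (-u + ((-1) * s + 0) *\<^sub>R v, 0 + ((-1) * s + 0) *\<^sub>R br (-u) v))"
      by (rule aff_comp[OF B0])
    moreover have "(-u + ((-1) * s + 0) *\<^sub>R v, 0 + ((-1) * s + 0) *\<^sub>R br (-u) v) = (- (u + s *\<^sub>R v), s *\<^sub>R br u v)" for s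
      by (simp add: bilinear_lneg[OF bl])
    ultimately show ?thesis by simp
  qed
  have mid: "g' (0, Z) = (g' (X, Z) + g' (-X, Z)) / 2" for X Z
  proof -
    have l: "affine_real_fun (\<lambda>t. g' (0 + t *\<^sub>R X, Z + t *\<^sub>R br 0 X))"
      by (rule H_line[OF bl H'])
    have "g' (0 + (-1) *\<^sub>R X, Z + (-1) *\<^sub>R br 0 X) = g' (0 + 0 *\<^sub>R X, Z + 0 *\<^sub>R br 0 X) + (-1) * (g' (0 + 1 *\<^sub>R X, Z + 1 *\<^sub>R br 0 X) - g' (0 + 0 *\<^sub>R X, Z + 0 *\<^sub>R br 0 X))"
      using aff_val[OF l, of "-1"] by simp
    then show ?thesis by (simp add: bilinear_lzero[OF bl])
  qed
  have "affine_real_fun (\<lambda>s. (1/2) * (g' (u + s *\<^sub>R v, s *\<^sub>R br u v) + g' (- (u + s *\<^sub>R v), s *\<^sub>R br u v)))"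
    using aff_scale[OF aff_add[OF A B], of "1/2"] by (simp only: add_0_left)
  moreover have "g (p + (0, s *\<^sub>R br u v)) = (1/2) * (g' (u + s *\<^sub>R v, s *\<^sub>R br u v) + g' (- (u + s *\<^sub>R v), s *\<^sub>R br u v))" for s
    using mid[of "s *\<^sub>R br u v" "u + s *\<^sub>R v"] g'0[of "s *\<^sub>R br u v"] by simp
  ultimately show "affine_real_fun (\<lambda>s. g (p + (0, s *\<^sub>R br u v)))"
    by (rule aff_cong)
qed



lemma LinD:
  fixes A :: "'b::real_vector \<Rightarrow> real" and br :: "'a::real_vector \<Rightarrow> 'a \<Rightarrow> 'b"
  assumes bl: "bilinear br" and sp: "span {br x y | x y. True} = UNIV"
    and add: "\<And>a b. A (a + b) = A a + A b"
    and hom: "\<And>c u v. A (c *\<^sub>R br u v) = c * A (br u v)"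
  shows "linear A"
proof -
  have A0: "A 0 = 0" using add[of 0 0] by simp
  have sc: "\<forall>c. A (c *\<^sub>R z) = c * A z" for z
  proof -
    have "z \<in> span {br x y | x y. True}" using sp by simp
    then show ?thesis
    proof (induction rule: span_induct_alt)
      case base
      then show ?case using A0 by simp
    next
      case (step k x y)
      then obtain u v where x: "x = br u v" by blast
      show ?case
      proof
        fix c
        have "A (c *\<^sub>R (k *\<^sub>R x + y)) = A ((c * k) *\<^sub>R x) + A (c *\<^sub>R y)"
          by (simp add: add scaleR_add_right)
        also have "\<dots> = c * (k * A x) + c * A y"
          using step.IH hom[of "c*k" u v] hom[of k u v] x by simp
        also have "\<dots> = c * A (k *\<^sub>R x + y)"
          using hom[of k u v] x by (simp add: add algebra_simps)
        finally show "A (c *\<^sub>R (k *\<^sub>R x + y)) = c * A (k *\<^sub>R x + y)" .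
      qed
    qed
  qed
  show ?thesis by (rule linearI) (simp_all add: add sc)
qed

lemma vd_sum_pt: "vd (a + b) h p = vd a h p + vd b h p + vd a (vd b h) p"
proof -
  have e: "h (p + (0, a+b)) = h (p + (0,a) + (0,b))" by (simp only: pair_add3)
  show ?thesis unfolding vd_def e by linarith
qed

lemma vd_sum_fun: "vd (a + b) h = (\<lambda>p. vd a h p + vd b h p + vd a (vd b h) p)"
  by (rule ext) (rule vd_sum_pt)

lemma G_lin:
  assumes bl: "bilinear br" and H: "h_affine br g"
  shows "linear (\<lambda>x. g (q + (0, br x y)) - g q)" and "linear (\<lambda>a. g (q + (0, br x a)) - g q)"
proof -
  let ?\<psi> = "\<lambda>x. g (q + (0, br x y))"
  have "affine_real_fun (\<lambda>t. ?\<psi> (a + t *\<^sub>R a'))" for a a'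
  proof -
    have "affine_real_fun (\<lambda>t. g ((q + (0, br a y)) + (0, t *\<^sub>R br a' y)))"
      using F2[OF bl H, of a' y] unfolding alongv_def by blast
    moreover have "(q + (0, br a y)) + (0, t *\<^sub>R br a' y) = q + (0, br (a + t *\<^sub>R a') y)" for t
      by (simp add: bilinear_ladd[OF bl] bilinear_lmul[OF bl] algebra_simps)
    ultimately show ?thesis by simp
  qed
  then have "linear (\<lambda>x. ?\<psi> x - ?\<psi> 0)" by (rule lines_linear)
  then show "linear (\<lambda>x. g (q + (0, br x y)) - g q)" by (simp add: bilinear_lzero[OF bl])
next
  let ?\<psi> = "\<lambda>a. g (q + (0, br x a))"
  have "affine_real_fun (\<lambda>t. ?\<psi> (a + t *\<^sub>R a'))" for a a'
  proof -
    have "affine_real_fun (\<lambda>t. g ((q + (0, br x a)) + (0, t *\<^sub>R br x a')))"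
      using F2[OF bl H, of x a'] unfolding alongv_def by blast
    moreover have "(q + (0, br x a)) + (0, t *\<^sub>R br x a')  = q + (0, br x (a + t *\<^sub>R a'))" for t
      by (simp add: bilinear_radd[OF bl] bilinear_rmul[OF bl] algebra_simps)
    ultimately show ?thesis by simp
  qed
  then have "linear (\<lambda>x. ?\<psi> x - ?\<psi> 0)" by (rule lines_linear)
  then show "linear (\<lambda>a. g (q + (0, br x a)) - g q)" by (simp add: bilinear_rzero[OF bl])
qed



lemma MD:
  fixes br :: "'a::real_vector \<Rightarrow> 'a \<Rightarrow> 'b::real_vector"
  assumes bl: "bilinear br" and sp: "span {br x y | x y. True} = UNIV"
    and cond: "\<forall>b :: 'a \<Rightarrow> 'b \<Rightarrow> real. bilinear b \<and> (\<forall>x x'. b x (br x x') = 0) \<longrightarrow> (\<forall>x z. b x z = 0)"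
    and H: "h_affine br g" and P: "pol UNIV 2 g"
  shows "pol UNIV 1 g"
proof -
  have T3: "vd f (vd e (vd d g)) p = 0" for d e f p
  proof -
    have "pol UNIV (Suc (Suc 0)) g" using P by (simp add: numeral_2_eq_2)
    then have "pol UNIV 0 (vd e (vd d g))" by simp
    then have "vd e (vd d g) (p + (0, f)) = vd e (vd d g) p" by (simp only: pol.simps) blast
    then show ?thesis by (simp add: vd_def[of f])
  qed
  have S1: "vd z (vd (br x y) g) p = 0" for x y z p
  proof -
    define b where "b = (\<lambda>x z. vd z (vd (br x y) g) p)"
    have bil: "bilinear b"
      unfolding bilinear_def
    proof (intro conjI allI)
      fix x
      let ?h = "vd (br x y) g"
      have Hh: "h_affine br ?h" by (rule H_vd[OF bl H])
      show "linear (\<lambda>z. b x z)" unfolding b_def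
      proof (rule LinD[OF bl sp])
        show "vd (a + c) ?h p = vd a ?h p + vd c ?h p" for a c
          using vd_sum_pt[of a c ?h p] T3[of a c "br x y" p] by simp
        show "vd (c *\<^sub>R br u v) ?h p = c * vd (br u v) ?h p" for c u v
          by (rule alongv_vd_scale[OF F2[OF bl Hh]])
      qed
    next
      fix z
      have e: "b x z = (g (p + (0, z) + (0, br x y)) - g (p + (0, z))) - (g (p + (0, br x y)) - g p)" for x
        by (simp add: b_def vd_def)
      show "linear (\<lambda>x. b x z)" unfolding e
        by (intro linear_compose_sub G_lin(1)[OF bl H])
    qed
    have van: "b x (br x x') = 0" for x x'
    proof -
      have l: "linear (\<lambda>a. g (p + (0, br x a)) - g p)" by (rule G_lin(2)[OF bl H])
      have "b x (br x x') = (g (p + (0, br x (x' + y))) - g p) - (g (p + (0, br x x')) - g p) - (g (p + (0, br x y)) - g p)"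
        by (simp add: b_def vd_def pair_add3 bilinear_radd[OF bl] algebra_simps)
      also have "\<dots> = 0" using linear_add[OF l, of x' y] by simp
      finally show ?thesis .
    qed
    have "b x z = 0" using cond bil van by blast
    then show ?thesis by (simp add: b_def)
  qed
  have S2: "\<forall>z p. vd z (vd e g) p = 0" for e
  proof -
    have "e \<in> span {br x y | x y. True}" using sp by simp
    then show ?thesis
    proof (induction rule: span_induct_alt)
      case base
      have "vd 0 g = (\<lambda>p. 0)" by (rule ext) (simp add: vd_def)
      then show ?case by (simp add: vd_def)
    next
      case (step c x y)
      then obtain u v where x: "x = br u v" by blast
      have cx: "c *\<^sub>R x = br (c *\<^sub>R u) v" by (simp add: x bilinear_lmul[OF bl])
      show ?case
      proof (intro allI)
        fix z p
        have "vd z (vd (c *\<^sub>R x + y) g) p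
            = vd z (vd (c *\<^sub>R x) g) p + vd z (vd y g) p + vd z (vd (c *\<^sub>R x) (vd y g)) p"
          unfolding vd_sum_fun[of "c *\<^sub>R x" y g] by (simp add: vd_def algebra_simps)
        also have "\<dots> = 0"
          using S1[of z "c *\<^sub>R u" v p] step.IH T3[of z "c *\<^sub>R x" y p] cx by simp
        finally show "vd z (vd (c *\<^sub>R x + y) g) p = 0" .
      qed
    qed
  qed
  show ?thesis
  proof (simp only: pol.simps One_nat_def, intro ballI allI impI)
    fix d p f
    have "vd f (vd d g) p = 0" using S2[of d] by blast
    then show "vd d g (p + (0, f)) = vd d g p" unfolding vd_def[of f "vd d g"] by linarith
  qed
qed

lemma Descent:
  fixes br :: "'a::real_vector \<Rightarrow> 'a \<Rightarrow> 'b::real_vector"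
  assumes bl: "bilinear br" and sp: "span {br x y | x y. True} = UNIV"
    and cond: "\<forall>b :: 'a \<Rightarrow> 'b \<Rightarrow> real. bilinear b \<and> (\<forall>x x'. b x (br x x') = 0) \<longrightarrow> (\<forall>x z. b x z = 0)"
  shows "h_affine br g \<Longrightarrow> pol UNIV (Suc n) g \<Longrightarrow> pol UNIV 1 g"
proof (induction n arbitrary: g)
  case 0
  then show ?case by simp
next
  case (Suc n)
  have "pol UNIV 1 (vd d g)" for d
    using Suc.IH[OF H_vd[OF bl Suc.prems(1)]] Suc.prems(2) by simp
  then have "pol UNIV 2 g" by (simp add: numeral_2_eq_2)
  then show ?case by (rule MD[OF bl sp cond Suc.prems(1)])
qed

lemma PolH:
  fixes br :: "'a::real_vector \<Rightarrow> 'a \<Rightarrow> 'b::euclidean_space"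
  assumes bl: "bilinear br" and sp: "span {br x y | x y. True} = UNIV"
    and H: "h_affine br g"
  shows "\<exists>n. pol UNIV n g"
proof -
  obtain B where B: "B \<subseteq> {br x y | x y. True}" "independent B" "{br x y | x y. True} \<subseteq> span B"
    by (rule maximal_independent_subset)
  have fin: "finite B" using independent_bound[OF B(2)] by blast
  have "span {br x y | x y. True} \<subseteq> span B" using B(3) by (simp add: span_minimal)
  then have spB: "span B = UNIV" using sp by auto
  have "\<forall>w\<in>B. alongv w g" using B(1) F2[OF bl H] by blast
  then have "pol (span B) (card B) g" by (rule P3[OF fin])
  then show ?thesis using spB by auto
qed



lemma Final:
  fixes br :: "'a::real_vector \<Rightarrow> 'a \<Rightarrow> 'b::real_vector"
  assumes bl: "bilinear br" and asym: "\<forall>x y. br x y = - br y x"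
    and sp: "span {br x y | x y. True} = UNIV"
    and cond: "\<forall>b :: 'a \<Rightarrow> 'b \<Rightarrow> real. bilinear b \<and> (\<forall>x x'. b x (br x x') = 0) \<longrightarrow> (\<forall>x z. b x z = 0)"
    and H: "h_affine br g" and P: "pol UNIV 1 g"
  shows "affine_map g"
proof -
  have pol1: "vd d g (p + (0, f)) = vd d g p" for d f p
    using P by (simp only: pol.simps One_nat_def) blast
  define mu where "mu x z = g (x, z) - g (x, 0)" for x z
  have mu_vd: "mu x z = vd z g (x, 0)" for x z by (simp add: mu_def vd_def)
  have lin_mu: "linear (mu x)" for x
  proof (rule LinD[OF bl sp])
    show "mu x (a + c) = mu x a + mu x c" for a c
    proof -
      have "vd a (vd c g) (x, 0) = 0" using pol1[of c "(x,0)" a] by (simp add: vd_def[of a])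
      then show ?thesis unfolding mu_vd using vd_sum_pt[of a c g "(x,0)"] by simp
    qed
    show "mu x (c *\<^sub>R br u v) = c * mu x (br u v)" for c u v
      unfolding mu_vd by (rule alongv_vd_scale[OF F2[OF bl H]])
  qed
  have lin_x: "linear (\<lambda>x. mu x z - mu 0 z)" for z
  proof -
    have Hz: "h_affine br (vd z g)" by (rule H_vd[OF bl H])
    have "affine_real_fun (\<lambda>t. vd z g (x + t *\<^sub>R y, 0))" for x y
    proof -
      have "affine_real_fun (\<lambda>t. vd z g (x + t *\<^sub>R y, 0 + t *\<^sub>R br x y))"
        by (rule H_line[OF bl Hz])
      moreover have "vd z g (x + t *\<^sub>R y, 0 + t *\<^sub>R br x y) = vd z g (x + t *\<^sub>R y, 0)" for t
        using pol1[of z "(x + t *\<^sub>R y, 0)" "t *\<^sub>R br x y"] by simp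
      ultimately show ?thesis by simp
    qed
    then have "linear (\<lambda>x. vd z g (x, 0) - vd z g (0, 0))"
      using lines_linear[of "\<lambda>x. vd z g (x, 0)"] by (simp add: zero_prod_def)
    then show ?thesis unfolding mu_vd .
  qed
  define b where "b x z = mu x z - mu 0 z" for x z
  have bil: "bilinear b"
    unfolding bilinear_def b_def
    by (intro conjI allI linear_compose_sub lin_mu lin_x)
  define \<alpha> where "\<alpha> x = g (x, 0)" for x
  have gdec: "g (x, z) = \<alpha> x + mu 0 z + b x z" for x z
    by (simp add: \<alpha>_def b_def mu_def)
  have G: "affine_real_fun (\<lambda>t. g (x + t *\<^sub>R y, 0 + t *\<^sub>R br x y))" for x y
    by (rule H_line[OF bl H])
  have E1: "\<alpha> (x + y) + \<alpha> (x - y) - 2 * \<alpha> x + 2 * b y (br x y) = 0" for x y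
  proof -
    let ?w = "br x y"
    have v1: "g (x + 1 *\<^sub>R y, 0 + 1 *\<^sub>R ?w) = g (x + 0 *\<^sub>R y, 0 + 0 *\<^sub>R ?w) + 1 * (g (x + 1 *\<^sub>R y, 0 + 1 *\<^sub>R ?w) - g (x + 0 *\<^sub>R y, 0 + 0 *\<^sub>R ?w))"
      by simp
    have vm: "g (x + (-1) *\<^sub>R y, 0 + (-1) *\<^sub>R ?w) = g (x + 0 *\<^sub>R y, 0 + 0 *\<^sub>R ?w) + (-1) * (g (x + 1 *\<^sub>R y, 0 + 1 *\<^sub>R ?w) - g (x + 0 *\<^sub>R y, 0 + 0 *\<^sub>R ?w))"
      using aff_val[OF G[of x y], of "-1"] by simp
    then have s: "g (x + y, ?w) + g (x - y, - ?w) = 2 * g (x, 0)" by simp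
    have m1: "mu 0 (- ?w) = - mu 0 ?w" using linear_neg[OF lin_mu] by blast
    have e1: "g (x + y, ?w) = \<alpha> (x + y) + mu 0 ?w + b x ?w + b y ?w"
      using gdec[of "x + y" ?w] bilinear_ladd[OF bil] by simp
    have e2: "g (x - y, - ?w) = \<alpha> (x - y) - mu 0 ?w - b x ?w + b y ?w"
      using gdec[of "x - y" "- ?w"] bilinear_lsub[OF bil, of x y "- ?w"] bilinear_rneg[OF bil] m1 by simp
    have e3: "g (x, 0) = \<alpha> x" by (simp add: \<alpha>_def)
    show ?thesis using s e1 e2 e3 by linarith
  qed
  have dbl: "\<alpha> ((2::real) *\<^sub>R y) = 2 * \<alpha> y - \<alpha> 0" for y
  proof -
    have "g (0 + 2 *\<^sub>R y, 0 + 2 *\<^sub>R br 0 y) = g (0 + 0 *\<^sub>R y, 0 + 0 *\<^sub>R br 0 y) + 2 * (g (0 + 1 *\<^sub>R y, 0 + 1 *\<^sub>R br 0 y) - g (0 + 0 *\<^sub>R y, 0 + 0 *\<^sub>R br 0 y))"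
      using aff_val[OF G[of 0 y], of 2] by simp
    then show ?thesis by (simp add: \<alpha>_def bilinear_lzero[OF bl] zero_prod_def)
  qed
  have c0: "b y (br x y) = 0" for x y
  proof -
    have a: "\<alpha> ((2::real) *\<^sub>R x + 2 *\<^sub>R y) + \<alpha> (2 *\<^sub>R x - 2 *\<^sub>R y) - 2 * \<alpha> (2 *\<^sub>R x) + 2 * b (2 *\<^sub>R y) (br (2 *\<^sub>R x) (2 *\<^sub>R y)) = 0"
      by (rule E1)
    have b8: "b ((2::real) *\<^sub>R y) (br (2 *\<^sub>R x) (2 *\<^sub>R y)) = 8 * b y (br x y)"
      by (simp add: bilinear_lmul[OF bl] bilinear_rmul[OF bl] bilinear_lmul[OF bil] bilinear_rmul[OF bil])
    have s1: "\<alpha> ((2::real) *\<^sub>R x + 2 *\<^sub>R y) = 2 * \<alpha> (x + y) - \<alpha> 0"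
      using dbl[of "x + y"] by (simp add: scaleR_add_right)
    have s2: "\<alpha> ((2::real) *\<^sub>R x - 2 *\<^sub>R y) = 2 * \<alpha> (x - y) - \<alpha> 0"
      using dbl[of "x - y"] by (simp add: scaleR_diff_right)
    have s3: "\<alpha> ((2::real) *\<^sub>R x) = 2 * \<alpha> x - \<alpha> 0" by (rule dbl)
    show ?thesis using a b8 s1 s2 s3 E1[of x y] by linarith
  qed
  have van: "b x (br x x') = 0" for x x'
  proof -
    have "b x (br x x') = b x (- br x' x)" using asym by metis
    also have "\<dots> = - b x (br x' x)" by (rule bilinear_rneg[OF bil])
    finally show ?thesis using c0[of x x'] by simp
  qed
  have b0: "b x z = 0" for x z using cond bil van by blast
  have lin_a: "linear (\<lambda>x. \<alpha> x - \<alpha> 0)"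
  proof (rule lines_linear)
    fix x y
    have "affine_real_fun (\<lambda>t. g (x + t *\<^sub>R y, 0 + t *\<^sub>R br x y) - (mu 0 (br x y) * t + 0))"
      by (rule aff_diff[OF G aff_lin])
    moreover have "g (x + t *\<^sub>R y, 0 + t *\<^sub>R br x y) - (mu 0 (br x y) * t + 0) = \<alpha> (x + t *\<^sub>R y)" for t
      using gdec[of "x + t *\<^sub>R y" "t *\<^sub>R br x y"] b0 linear_scale[OF lin_mu[of 0]] by simp
    ultimately show "affine_real_fun (\<lambda>t. \<alpha> (x + t *\<^sub>R y))" by simp
  qed
  show ?thesis
    unfolding affine_map_def
  proof (intro exI conjI allI)
    show "linear (\<lambda>p. (\<alpha> (fst p) - \<alpha> 0) + mu 0 (snd p))"
      by (rule linearI) (simp_all add: linear_add[OF lin_a] linear_add[OF lin_mu]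
            linear_scale[OF lin_a] linear_scale[OF lin_mu] algebra_simps)
    fix p :: "'a \<times> 'b"
    show "g p = (\<alpha> (fst p) - \<alpha> 0) + mu 0 (snd p) + \<alpha> 0"
      using gdec[of "fst p" "snd p"] b0 by simp
  qed
qed



theorem theorem5p12:
  fixes br :: "'a::euclidean_space \<Rightarrow> 'a \<Rightarrow> 'b::euclidean_space"
  assumes "step_two_carnot br"
  shows "{f :: 'a \<times> 'b \<Rightarrow> real. h_affine br f} = {f. affine_map f}
    \<longleftrightarrow> (\<forall>b :: 'a \<Rightarrow> 'b \<Rightarrow> real. bilinear b \<and> (\<forall>x x'. b x (br x x') = 0)
           \<longrightarrow> (\<forall>x z. b x z = 0))"
proof -
  have st: "bilinear br \<and> (\<forall>x y. br x y = - br y x) \<and> span {br x y | x y. True} = UNIV"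
    using assms unfolding step_two_carnot_def .
  have bl: "bilinear br" using st by (rule conjunct1)
  have asym: "\<forall>x y. br x y = - br y x" using st by (blast dest: conjunct2)
  have sp: "span {br x y | x y. True} = UNIV" using st by (blast dest: conjunct2)
  show ?thesis
  proof
    assume eq: "{f :: 'a \<times> 'b \<Rightarrow> real. h_affine br f} = {f. affine_map f}"
    show "\<forall>b :: 'a \<Rightarrow> 'b \<Rightarrow> real. bilinear b \<and> (\<forall>x x'. b x (br x x') = 0) \<longrightarrow> (\<forall>x z. b x z = 0)"
    proof (intro allI impI)
      fix b :: "'a \<Rightarrow> 'b \<Rightarrow> real" and x z
      assume a: "bilinear b \<and> (\<forall>x x'. b x (br x x') = 0)"
      then have bb: "bilinear b" and vb: "\<And>x x'. b x (br x x') = 0" by auto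
      define f where "f p = b (fst p) (snd p)" for p :: "'a \<times> 'b"
      have "h_affine br f"
        unfolding h_affine_def
      proof (intro allI)
        fix p :: "'a \<times> 'b" and y
        have w0: "b y (br (fst p) y) = 0"
        proof -
          have "b y (br (fst p) y) = b y (- br y (fst p))" using asym by metis
          also have "\<dots> = 0" using bilinear_rneg[OF bb] vb by simp
          finally show ?thesis .
        qed
        have "f (carnot_mult br p (t *\<^sub>R y, 0)) = b y (snd p) * t + b (fst p) (snd p)" for t
          by (simp add: f_def carnot_mult_def bilinear_rmul[OF bl] bilinear_ladd[OF bb]
              bilinear_radd[OF bb] bilinear_lmul[OF bb] bilinear_rmul[OF bb] vb w0)
        then show "affine_real_fun (\<lambda>t. f (carnot_mult br p (t *\<^sub>R y, 0)))"
          using aff_lin by simp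
      qed
      then have "affine_map f" using eq by blast
      then obtain L c where L: "linear L" "\<And>p. f p = L p + c" unfolding affine_map_def by blast
      have "f 0 = 0" by (simp add: f_def bilinear_lzero[OF bb])
      then have c0: "c = 0" using L linear_0[OF L(1)] by simp
      have "f ((2::real) *\<^sub>R (x, z)) = 4 * f (x, z)"
        by (simp add: f_def bilinear_lmul[OF bb] bilinear_rmul[OF bb])
      moreover have "f ((2::real) *\<^sub>R (x, z)) = 2 * f (x, z)"
        using L c0 linear_scale[OF L(1), of 2 "(x, z)"] by simp
      ultimately have "f (x, z) = 0" by simp
      then show "b x z = 0" by (simp add: f_def)
    qed
  next
    assume cond: "\<forall>b :: 'a \<Rightarrow> 'b \<Rightarrow> real. bilinear b \<and> (\<forall>x x'. b x (br x x') = 0) \<longrightarrow> (\<forall>x z. b x z = 0)"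
    show "{f :: 'a \<times> 'b \<Rightarrow> real. h_affine br f} = {f. affine_map f}"
    proof (intro set_eqI iffI; simp only: mem_Collect_eq)
      fix g :: "'a \<times> 'b \<Rightarrow> real"
      assume H: "h_affine br g"
      obtain n where "pol UNIV n g" using PolH[OF bl sp H] by blast
      then have "pol UNIV (Suc n) g" by (rule pol_mono)
      then have "pol UNIV 1 g" by (rule Descent[OF bl sp cond H])
      then show "affine_map g" by (rule Final[OF bl asym sp cond H])
    next
      fix g :: "'a \<times> 'b \<Rightarrow> real"
      assume "affine_map g"
      then obtain L c where L: "linear L" "\<And>p. g p = L p + c" unfolding affine_map_def by blast
      show "h_affine br g"
        unfolding h_affine_def
      proof (intro allI)
        fix p :: "'a \<times> 'b" and y
        have e: "carnot_mult br p (t *\<^sub>R y, 0) = p + t *\<^sub>R (y, br (fst p) y)" for t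
          by (simp add: carnot_mult_def bilinear_rmul[OF bl] prod_eq_iff)
        have "g (carnot_mult br p (t *\<^sub>R y, 0)) = L (y, br (fst p) y) * t + (L p + c)" for t
          unfolding e L(2) linear_add[OF L(1)] linear_scale[OF L(1)] by simp
        then show "affine_real_fun (\<lambda>t. g (carnot_mult br p (t *\<^sub>R y, 0)))"
          using aff_lin by simp
      qed
    qed
  qed
qed

end
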